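(* Let $T$ be a normal spanning tree of a connected graph $G$ with $n$ vertices and $m$ edges. Let $r,s\in\mathbb{I}^{m-n+1}$ with $r\ne s$, and suppose there exist $\Phi=(G,\varphi)\in\mathcal{A}_T(r)$ and $\Psi=(G,\psi)\in\mathcal{A}_T(s)$ such that $\Re(\varphi(C))=\Re(\psi(C))$ for every cycle $C$ of $G$. Then $\mathcal{A}_T(r)$ and $\mathcal{A}_T(s)$ are $\mathbb{T}$-cospectral, i.e. all $\mathbb{T}$-gain graphs in $\mathcal{A}_T(r)\cup\mathcal{A}_T(s)$ have adjacency matrices with the same spectrum.
   Context: Graphs are finite, simple and undirected. $\mathbb{T}=\{z\in\mathbb{C}:|z|=1\}$, $\mathbb{I}=[0,2\pi)$. A $\mathbb{T}$-gain on $G$ is a map $\varphi$ from oriented edges to $\mathbb{T}$ with $\varphi(\overrightarrow{e_{ts}})=\varphi(\overrightarrow{e_{st}})^{-1}$; $A(\Phi)$ for $\Phi=(G,\varphi)$ is the Hermitian matrix with $(s,t)$ entry $\varphi(\overrightarrow{e_{st}})$ if $v_s\sim v_t$, else $0$; $\mathcal{T}_G$ is the set of all $\mathbb{T}$-gain graphs on $G$. The gain of a directed cycle is the product of gains of its oriented edges; the two directions of a cycle $C$ have conjugate gains, so $\Re(\varphi(C))$ is well defined. A rooted spanning tree $T$ with root $v_r$ induces the tree order ($v_x\le v_y$ iff $v_x$ is on the $T$-path from $v_r$ to $v_y$); $T$ is normal if adjacent vertices of $G$ are always comparable. The suitably oriented graph $\overrightarrow{G_T}$ orients each edge $e_{st}$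 with $v_s\le v_t$ as $\overrightarrow{e_{st}}$ if $e_{st}\in E(T)$ and as $\overrightarrow{e_{ts}}$ otherwise; the $m-n+1$ fundamental cycles of $T$ become directed cycles $\overrightarrow{C_j(T)}$. For $r=(c_1,\dots,c_{m-n+1})\in\mathbb{I}^{m-n+1}$, $\mathcal{A}_T(r)=\{(G,\varphi)\in\mathcal{T}_G:\varphi(\overrightarrow{C_j(T)})=e^{ic_j}\ \forall j\}$. *)

theory Defs
  imports "Jordan_Normal_Form.Char_Poly"
begin

text \<open>Graphs: vertex set {0..<n} (vertex v_s is s), edge set E of 2-element subsets.\<close>

definition simple_graph :: "nat \<Rightarrow> nat set set \<Rightarrow> bool" where
  "simple_graph n E \<longleftrightarrow> (\<forall>e\<in>E. \<exists>u v. u \<noteq> v \<and> u < n \<and> v < n \<and> e = {u, v})"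

definition is_path :: "nat set set \<Rightarrow> nat list \<Rightarrow> bool" where
  "is_path F xs \<longleftrightarrow> xs \<noteq> [] \<and> distinct xs \<and> (\<forall>i. Suc i < length xs \<longrightarrow> {xs ! i, xs ! Suc i} \<in> F)"

definition is_cycle :: "nat set set \<Rightarrow> nat list \<Rightarrow> bool" where
  "is_cycle F xs \<longleftrightarrow> length xs \<ge> 3 \<and> is_path F xs \<and> {last xs, hd xs} \<in> F"

definition connected_on :: "nat \<Rightarrow> nat set set \<Rightarrow> bool" where
  "connected_on n F \<longleftrightarrow> (\<forall>u<n. \<forall>v<n. \<exists>xs. is_path F xs \<and> hd xs = u \<and> last xs = v)"

definition spanning_tree :: "nat \<Rightarrow> nat set set \<Rightarrow> nat set set \<Rightarrow> bool" where
  "spanning_tree n E ET \<longleftrightarrow> ET \<subseteq> E \<and> connected_on n ET \<and> (\<nexists>xs. is_cycle ET xs)"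

definition tree_le :: "nat set set \<Rightarrow> nat \<Rightarrow> nat \<Rightarrow> nat \<Rightarrow> bool" where
  "tree_le ET rt x y \<longleftrightarrow> (\<exists>xs. is_path ET xs \<and> hd xs = rt \<and> last xs = y \<and> x \<in> set xs)"

definition normal_spanning_tree :: "nat \<Rightarrow> nat set set \<Rightarrow> nat set set \<Rightarrow> nat \<Rightarrow> bool" where
  "normal_spanning_tree n E ET rt \<longleftrightarrow> spanning_tree n E ET \<and> rt < n \<and>
     (\<forall>u v. {u, v} \<in> E \<longrightarrow> tree_le ET rt u v \<or> tree_le ET rt v u)"

text \<open>T-gain graphs on G: phi s t is the gain of the oriented edge e_st.\<close>
definition gain :: "nat set set \<Rightarrow> (nat \<Rightarrow> nat \<Rightarrow> complex) \<Rightarrow> bool" where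
  "gain E \<phi> \<longleftrightarrow> (\<forall>s t. {s, t} \<in> E \<longrightarrow> cmod (\<phi> s t) = 1 \<and> \<phi> t s = inverse (\<phi> s t))"

definition gain_adj_mat :: "nat \<Rightarrow> nat set set \<Rightarrow> (nat \<Rightarrow> nat \<Rightarrow> complex) \<Rightarrow> complex mat" where
  "gain_adj_mat n E \<phi> = mat n n (\<lambda>(s, t). if {s, t} \<in> E then \<phi> s t else 0)"

definition cycle_gain :: "(nat \<Rightarrow> nat \<Rightarrow> complex) \<Rightarrow> nat list \<Rightarrow> complex" where
  "cycle_gain \<phi> xs = (\<Prod>i<length xs. \<phi> (xs ! i) (xs ! ((Suc i) mod length xs)))"

text \<open>Fundamental cycle of the non-tree edge {s,t} with s < t in the tree order, directed as in the
  suitably oriented graph: down the T-path from s to t along tree edges, then back along e_ts.\<close>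
definition fund_cycle :: "nat set set \<Rightarrow> nat \<Rightarrow> nat set \<Rightarrow> nat list" where
  "fund_cycle ET rt e = (THE xs. is_path ET xs \<and> {hd xs, last xs} = e \<and> tree_le ET rt (hd xs) (last xs))"

text \<open>A_T(r): the parameter r assigns to each fundamental cycle (indexed by its non-tree edge) a
  value in I = [0,2pi).\<close>
definition A_T :: "nat set set \<Rightarrow> nat set set \<Rightarrow> nat \<Rightarrow> (nat set \<Rightarrow> real) \<Rightarrow> (nat \<Rightarrow> nat \<Rightarrow> complex) set" where
  "A_T E ET rt r = {\<phi>. gain E \<phi> \<and>
      (\<forall>e \<in> E - ET. cycle_gain \<phi> (fund_cycle ET rt e) = exp (\<i> * complex_of_real (r e)))}"

text \<open>Same spectrum: same size and every eigenvalue has the same (algebraic) multiplicity.\<close>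
definition same_spectrum :: "complex mat \<Rightarrow> complex mat \<Rightarrow> bool" where
  "same_spectrum A B \<longleftrightarrow> dim_row A = dim_row B \<and>
     (\<forall>z. order z (char_poly A) = order z (char_poly B))"

end

theory Submission
  imports Defs
begin


fun chain :: "nat set set \<Rightarrow> nat list \<Rightarrow> bool" where
  "chain F [] = True"
| "chain F [x] = True"
| "chain F (x # y # zs) = ({x, y} \<in> F \<and> chain F (y # zs))"

lemma chain_nth: "chain F xs \<longleftrightarrow> (\<forall>i. Suc i < length xs \<longrightarrow> {xs ! i, xs ! Suc i} \<in> F)"
proof (induction F xs rule: chain.induct)
  case (3 F x y zs)
  show ?case
  proof
    assume "chain F (x # y # zs)"
    then show "\<forall>i. Suc i < length (x # y # zs) \<longrightarrow> {(x # y # zs) ! i, (x # y # zs) ! Suc i} \<in> F"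
      using 3 by (auto simp: less_Suc_eq_0_disj nth_Cons split: nat.splits)
  next
    assume H: "\<forall>i. Suc i < length (x # y # zs) \<longrightarrow> {(x # y # zs) ! i, (x # y # zs) ! Suc i} \<in> F"
    have "{x, y} \<in> F" using H[rule_format, of 0] by simp
    moreover have "chain F (y # zs)" using 3 H by force
    ultimately show "chain F (x # y # zs)" by simp
  qed
qed auto

lemma is_path_chain: "is_path F xs \<longleftrightarrow> xs \<noteq> [] \<and> distinct xs \<and> chain F xs"
  unfolding is_path_def chain_nth by auto

lemma chain_Cons: "chain F (x # xs) \<longleftrightarrow> chain F xs \<and> (xs \<noteq> [] \<longrightarrow> {x, hd xs} \<in> F)"
  by (cases xs) auto

lemma chain_append: "chain F (xs @ ys) \<longleftrightarrow> chain F xs \<and> chain F ys \<and> (xs \<noteq> [] \<and> ys \<noteq> [] \<longrightarrow> {last xs, hd ys} \<in> F)"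
  by (induction xs) (auto simp: chain_Cons hd_append)

lemma chain_rev: "chain F (rev xs) \<longleftrightarrow> chain F xs"
  by (induction F xs rule: chain.induct) (auto simp: chain_append insert_commute)

lemma path_cycle_gen:
  assumes acyc: "\<nexists>xs. is_cycle F xs"
  shows "is_path F (Z @ X) \<Longrightarrow> X \<noteq> [] \<Longrightarrow> Z \<noteq> [] \<Longrightarrow> (length Z \<ge> 2 \<or> hd X \<noteq> hd Y) \<Longrightarrow>
    is_path F Y \<Longrightarrow> set Y \<inter> set Z = {} \<Longrightarrow> {hd Y, hd Z} \<in> F \<Longrightarrow> last X = last Y \<Longrightarrow> False"
proof (induction X arbitrary: Z)
  case Nil then show ?case by simp
next
  case (Cons x X')
  show ?case
  proof (cases "x \<in> set Y")
    case True
    then obtain Y1 Y2 where Y: "Y = Y1 @ x # Y2" by (meson split_list)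
    define C where "C = Z @ [x] @ rev Y1"
    have dY: "distinct Y" "chain F Y" using Cons.prems(5) by (auto simp: is_path_chain)
    have dZ: "distinct (Z @ x # X')" "chain F (Z @ x # X')" using Cons.prems(1) by (auto simp: is_path_chain)
    have len: "length C \<ge> 3"
    proof (cases "Y1 = []")
      case True
      then have "hd Y = x" using Y by simp
      then have "length Z \<ge> 2" using Cons.prems(4) by auto
      then show ?thesis unfolding C_def by simp
    next
      case False
      then have "length Y1 \<ge> 1" by (cases Y1) auto
      moreover have "length Z \<ge> 1" using Cons.prems(3) by (cases Z) auto
      ultimately show ?thesis unfolding C_def by simp
    qed
    have dC: "distinct C" unfolding C_def using dY dZ Y Cons.prems(6) by auto
    have chZx: "chain F (Z @ [x])" using dZ(2) chain_append[of F "Z @ [x]" X'] by simp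
    have chY1x: "chain F (Y1 @ [x])" using dY(2) Y chain_append[of F "Y1 @ [x]" Y2] by simp
    have cC: "chain F C"
    proof (cases "Y1 = []")
      case True then show ?thesis unfolding C_def using chZx by simp
    next
      case False
      have "chain F (rev (Y1 @ [x]))" using chY1x chain_rev by blast
      then have "chain F (x # rev Y1)" by simp
      then have "chain F ([x] @ rev Y1)" by simp
      then show ?thesis unfolding C_def using chZx chain_append[of F Z "[x] @ rev Y1"]
        chain_append[of F Z "[x]"] Cons.prems(3) by simp
    qed
    have cl: "{last C, hd C} \<in> F"
    proof (cases "Y1 = []")
      case True
      then show ?thesis unfolding C_def using Y Cons.prems(7) Cons.prems(3) by (simp add: hd_append)
    next
      case False
      then have "last C = hd Y" unfolding C_def using Y by (simp add: last_rev hd_append)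
      then show ?thesis unfolding C_def using Cons.prems(7) Cons.prems(3) by (simp add: hd_append)
    qed
    have "is_cycle F C" unfolding is_cycle_def is_path_chain using len dC cC cl by auto
    then show False using acyc by blast
  next
    case False
    have "X' \<noteq> []"
    proof
      assume "X' = []"
      then have "last Y = x" using Cons.prems(8) by simp
      then show False using False Cons.prems(5) by (metis is_path_def last_in_set)
    qed
    show False
    proof (rule Cons.IH[of "Z @ [x]"])
      show "is_path F ((Z @ [x]) @ X')" using Cons.prems(1) by simp
      show "length (Z @ [x]) \<ge> 2 \<or> hd X' \<noteq> hd Y" using Cons.prems(3) by (cases Z) auto
      show "set Y \<inter> set (Z @ [x]) = {}" using Cons.prems(6) False by auto
      show "{hd Y, hd (Z @ [x])} \<in> F" using Cons.prems(7) Cons.prems(3) by (simp add: hd_append)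
      show "last X' = last Y" using Cons.prems(8) \<open>X' \<noteq> []\<close> by simp
    qed (use \<open>X' \<noteq> []\<close> Cons.prems in auto)
  qed
qed

lemma path_unique:
  assumes acyc: "\<nexists>xs. is_cycle F xs"
  shows "is_path F xs \<Longrightarrow> is_path F ys \<Longrightarrow> hd xs = hd ys \<Longrightarrow> last xs = last ys \<Longrightarrow> xs = ys"
proof (induction xs arbitrary: ys)
  case Nil then show ?case by (simp add: is_path_def)
next
  case (Cons a xs)
  have hl: "\<And>zs. is_path F zs \<Longrightarrow> hd zs = last zs \<Longrightarrow> length zs = 1"
  proof -
    fix zs assume "is_path F zs" "hd zs = last zs"
    then have "zs \<noteq> []" "distinct zs" by (auto simp: is_path_def)
    then obtain c zs' where zc: "zs = c # zs'" by (cases zs) auto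
    have "zs' = []"
    proof (rule ccontr)
      assume "zs' \<noteq> []"
      then have "last zs \<in> set zs'" using zc by simp
      moreover have "hd zs \<notin> set zs'" using zc \<open>distinct zs\<close> by simp
      ultimately show False using \<open>hd zs = last zs\<close> by simp
    qed
    then show "length zs = 1" using zc by simp
  qed
  obtain b ys' where ys: "ys = b # ys'" using Cons.prems(2) by (cases ys) (auto simp: is_path_def)
  have ab: "a = b" using Cons.prems(3) ys by simp
  show ?case
  proof (cases "xs = []")
    case True
    have h1: "hd ys = a" using Cons.prems(3) by simp
    have h2: "last ys = a" using Cons.prems(4) True by simp
    have "length ys = 1" using hl[OF Cons.prems(2)] h1 h2 by metis
    then show ?thesis using True ys ab by simp
  next
    case xsne: False
    show ?thesis
    proof (cases "ys' = []")
      case True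
      have h3: "last (a # xs) = a" using Cons.prems(4) ys True ab by simp
      have "length (a # xs) = 1" using hl[OF Cons.prems(1)] h3 by (metis list.sel(1))
      then show ?thesis using xsne by simp
    next
      case ysne: False
      have px: "is_path F xs" and py: "is_path F ys'"
        using Cons.prems(1,2) xsne ysne ys by (auto simp: is_path_chain chain_Cons)
      show ?thesis
      proof (cases "hd xs = hd ys'")
        case True
        have "xs = ys'" using Cons.IH[OF px py True] Cons.prems(4) xsne ysne ys by simp
        then show ?thesis using ys ab by simp
      next
        case False
        show ?thesis
        proof (rule path_cycle_gen[OF acyc, of "[a]" xs ys', THEN FalseE])
          show "is_path F ([a] @ xs)" using Cons.prems(1) by simp
          show "set ys' \<inter> set [a] = {}" using Cons.prems(2) ys ab by (auto simp: is_path_def)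
          show "{hd ys', hd [a]} \<in> F" using Cons.prems(2) ys ab ysne
            by (auto simp: is_path_chain chain_Cons insert_commute)
          show "last xs = last ys'" using Cons.prems(4) ys xsne ysne by simp
        qed (use xsne False py in auto)
      qed
    qed
  qed
qed



fun pg :: "(nat \<Rightarrow> nat \<Rightarrow> complex) \<Rightarrow> nat list \<Rightarrow> complex" where
  "pg \<phi> (x # y # zs) = \<phi> x y * pg \<phi> (y # zs)"
| "pg \<phi> _ = 1"

lemma pg_Cons: "xs \<noteq> [] \<Longrightarrow> pg \<phi> (x # xs) = \<phi> x (hd xs) * pg \<phi> xs"
  by (cases xs) auto

lemma pg_append: "xs \<noteq> [] \<Longrightarrow> ys \<noteq> [] \<Longrightarrow> pg \<phi> (xs @ ys) = pg \<phi> xs * \<phi> (last xs) (hd ys) * pg \<phi> ys"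
proof (induction xs)
  case Nil then show ?case by simp
next
  case (Cons x xs)
  show ?case
  proof (cases "xs = []")
    case True then show ?thesis using Cons.prems pg_Cons[of ys \<phi> x] by simp
  next
    case False
    have "pg \<phi> ((x # xs) @ ys) = \<phi> x (hd xs) * pg \<phi> (xs @ ys)"
      using pg_Cons[of "xs @ ys" \<phi> x] False by simp
    also have "\<dots> = \<phi> x (hd xs) * (pg \<phi> xs * \<phi> (last xs) (hd ys) * pg \<phi> ys)"
      using Cons.IH[OF False Cons.prems(2)] by simp
    also have "\<dots> = pg \<phi> (x # xs) * \<phi> (last (x # xs)) (hd ys) * pg \<phi> ys"
      using pg_Cons[of xs \<phi> x] False by simp
    finally show ?thesis .
  qed
qed

lemma pg_prod: "pg \<phi> xs = (\<Prod>i<length xs - 1. \<phi> (xs ! i) (xs ! Suc i))"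
proof (induction \<phi> xs rule: pg.induct)
  case (1 \<phi> x y zs)
  have "(\<Prod>i<length (x # y # zs) - 1. \<phi> ((x # y # zs) ! i) ((x # y # zs) ! Suc i))
      = (\<Prod>i<Suc (length zs). \<phi> ((x # y # zs) ! i) ((x # y # zs) ! Suc i))" by simp
  also have "\<dots> = \<phi> x y * (\<Prod>i<length zs. \<phi> ((y # zs) ! i) ((y # zs) ! Suc i))"
    by (simp only: prod.lessThan_Suc_shift) simp
  finally show ?case using 1 by simp
qed auto

lemma cycle_gain_pg: "xs \<noteq> [] \<Longrightarrow> cycle_gain \<phi> xs = pg \<phi> xs * \<phi> (last xs) (hd xs)"
proof -
  assume ne: "xs \<noteq> []"
  define m where "m = length xs - 1"
  have lm: "length xs = Suc m" using ne unfolding m_def by (cases xs) auto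
  have "cycle_gain \<phi> xs = (\<Prod>i<Suc m. \<phi> (xs ! i) (xs ! (Suc i mod Suc m)))"
    unfolding cycle_gain_def lm ..
  also have "\<dots> = (\<Prod>i<m. \<phi> (xs ! i) (xs ! (Suc i mod Suc m))) * \<phi> (xs ! m) (xs ! 0)"
    by simp
  also have "(\<Prod>i<m. \<phi> (xs ! i) (xs ! (Suc i mod Suc m))) = (\<Prod>i<m. \<phi> (xs ! i) (xs ! Suc i))"
    by (rule prod.cong) auto
  also have "\<dots> = pg \<phi> xs" unfolding pg_prod m_def ..
  also have "xs ! m = last xs" using ne unfolding m_def by (simp add: last_conv_nth)
  also have "xs ! 0 = hd xs" using ne by (simp add: hd_conv_nth)
  finally show ?thesis .
qed

lemma prod_shift_mod: "(\<Prod>i<N. f (Suc i mod N)) = (\<Prod>i<N. (f i :: complex))"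
proof (cases N)
  case 0 then show ?thesis by simp
next
  case (Suc m)
  have "(\<Prod>i<Suc m. f (Suc i mod Suc m)) = (\<Prod>i<m. f (Suc i mod Suc m)) * f 0" by simp
  also have "(\<Prod>i<m. f (Suc i mod Suc m)) = (\<Prod>i<m. f (Suc i))" by (rule prod.cong) auto
  also have "(\<Prod>i<m. f (Suc i)) * f 0 = (\<Prod>i<Suc m. f i)" by (simp only: prod.lessThan_Suc_shift) simp
  finally show ?thesis using Suc by simp
qed

lemma gain_inv: "gain E \<phi> \<Longrightarrow> {u, v} \<in> E \<Longrightarrow> \<phi> u v * \<phi> v u = 1 \<and> \<phi> u v \<noteq> 0"
proof -
  assume g: "gain E \<phi>" "{u, v} \<in> E"
  then have "cmod (\<phi> u v) = 1" "\<phi> v u = inverse (\<phi> u v)" unfolding gain_def by auto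
  moreover have "\<phi> u v \<noteq> 0" using \<open>cmod (\<phi> u v) = 1\<close> by (metis norm_zero zero_neq_one)
  ultimately show ?thesis by (simp add: right_inverse)
qed

lemma pg_nz: "gain E \<phi> \<Longrightarrow> chain E xs \<Longrightarrow> pg \<phi> xs \<noteq> 0"
  by (induction \<phi> xs rule: pg.induct) (auto dest: gain_inv)



definition tpath :: "nat set set \<Rightarrow> nat \<Rightarrow> nat \<Rightarrow> nat list" where
  "tpath ET rt v = (THE xs. is_path ET xs \<and> hd xs = rt \<and> last xs = v)"

lemma tpath_eq:
  assumes acyc: "\<nexists>xs. is_cycle ET xs" and "is_path ET xs" "hd xs = rt" "last xs = v"
  shows "tpath ET rt v = xs"
  unfolding tpath_def
proof (rule the_equality)
  show "is_path ET xs \<and> hd xs = rt \<and> last xs = v" using assms by simp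
  fix ys assume "is_path ET ys \<and> hd ys = rt \<and> last ys = v"
  then show "ys = xs" using path_unique[OF acyc, of ys xs] assms by simp
qed

lemma tpath_ex:
  assumes acyc: "\<nexists>xs. is_cycle ET xs" and con: "connected_on n ET" and "rt < n" "v < n"
  shows "is_path ET (tpath ET rt v) \<and> hd (tpath ET rt v) = rt \<and> last (tpath ET rt v) = v"
proof -
  obtain xs where "is_path ET xs" "hd xs = rt" "last xs = v"
    using con assms unfolding connected_on_def by blast
  then show ?thesis using tpath_eq[OF acyc] by simp
qed

lemma path_prefix: "is_path F (ys @ zs) \<Longrightarrow> ys \<noteq> [] \<Longrightarrow> is_path F ys"
  unfolding is_path_chain using chain_append by auto

lemma path_suffix: "is_path F (ys @ zs) \<Longrightarrow> zs \<noteq> [] \<Longrightarrow> is_path F zs"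
  unfolding is_path_chain using chain_append by auto

lemma tpath_prefix:
  assumes acyc: "\<nexists>xs. is_cycle ET xs" and "is_path ET (ys @ zs)" "hd (ys @ zs) = rt" "ys \<noteq> []"
  shows "tpath ET rt (last ys) = ys"
  using tpath_eq[OF acyc] path_prefix[OF assms(2,4)] assms(3,4) by (simp add: hd_append)

lemma tree_le_tpath:
  assumes acyc: "\<nexists>xs. is_cycle ET xs" and "tree_le ET rt x y"
  shows "is_path ET (tpath ET rt y) \<and> hd (tpath ET rt y) = rt \<and> last (tpath ET rt y) = y \<and> x \<in> set (tpath ET rt y)"
proof -
  obtain xs where "is_path ET xs" "hd xs = rt" "last xs = y" "x \<in> set xs"
    using assms(2) unfolding tree_le_def by blast
  then show ?thesis using tpath_eq[OF acyc] by simp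
qed

lemma tree_le_antisym:
  assumes acyc: "\<nexists>xs. is_cycle ET xs" and uv: "tree_le ET rt u v" and vu: "tree_le ET rt v u"
  shows "u = v"
proof -
  note P = tree_le_tpath[OF acyc uv]
  then obtain A B where AB: "tpath ET rt v = A @ u # B" by (meson split_list)
  have Pu: "tpath ET rt u = A @ [u]"
    using tpath_prefix[OF acyc, of "A @ [u]" B rt] P AB by simp
  have "v \<in> set (A @ [u])" using tree_le_tpath[OF acyc vu] Pu by simp
  moreover have "distinct (A @ u # B)" using P AB by (simp add: is_path_def)
  moreover have "v = last (A @ u # B)" using P AB by simp
  ultimately show ?thesis
  proof (cases "B = []")
    case False
    then have "last (A @ u # B) \<in> set B" by simp
    then show ?thesis using \<open>v \<in> set (A @ [u])\<close> \<open>distinct (A @ u # B)\<close> \<open>v = last (A @ u # B)\<close> by auto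
  qed simp
qed



lemma chain_mono: "F \<subseteq> G \<Longrightarrow> chain F xs \<Longrightarrow> chain G xs"
  by (induction F xs rule: chain.induct) auto

lemma sg_edge: "simple_graph n E \<Longrightarrow> {u, v} \<in> E \<Longrightarrow> u \<noteq> v \<and> u < n \<and> v < n"
proof -
  assume "simple_graph n E" "{u, v} \<in> E"
  then obtain a b where "a \<noteq> b" "a < n" "b < n" "{u, v} = {a, b}" unfolding simple_graph_def by blast
  then show ?thesis by (auto simp: doubleton_eq_iff)
qed

lemma rel_sym:
  assumes g: "gain E \<phi>" and g': "gain E \<phi>'" and e: "{u, v} \<in> E"
    and r: "\<phi>' v u * hv = \<phi> v u * hu"
  shows "\<phi>' u v * hu = \<phi> u v * hv"
proof -
  have a: "\<phi> u v * \<phi> v u = 1" using gain_inv[OF g e] by simp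
  have b: "\<phi>' u v * \<phi>' v u = 1" using gain_inv[OF g' e] by simp
  have "\<phi>' u v * hu = \<phi>' u v * hu * (\<phi> u v * \<phi> v u)" using a by simp
  also have "\<dots> = \<phi> u v * \<phi>' u v * (\<phi> v u * hu)" by (simp add: algebra_simps)
  also have "\<dots> = \<phi> u v * \<phi>' u v * (\<phi>' v u * hv)" using r by simp
  also have "\<dots> = \<phi> u v * hv * (\<phi>' u v * \<phi>' v u)" by (simp add: algebra_simps)
  also have "\<dots> = \<phi> u v * hv" using b by simp
  finally show ?thesis .
qed

context
  fixes n E ET rt \<phi> \<phi>'
  assumes sg: "simple_graph n E" and nst: "normal_spanning_tree n E ET rt"
    and g: "gain E \<phi>" and g': "gain E \<phi>'"
    and fc: "\<forall>e\<in>E - ET. cycle_gain \<phi>' (fund_cycle ET rt e) = cycle_gain \<phi> (fund_cycle ET rt e)"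
begin

definition "hh v = pg \<phi>' (tpath ET rt v) / pg \<phi> (tpath ET rt v)"

lemma acyc: "\<nexists>xs. is_cycle ET xs"
  using nst unfolding normal_spanning_tree_def spanning_tree_def by blast
lemma conET: "connected_on n ET" and ETE: "ET \<subseteq> E" and rtn: "rt < n"
  using nst unfolding normal_spanning_tree_def spanning_tree_def by blast+

lemma P: "v < n \<Longrightarrow> is_path ET (tpath ET rt v) \<and> hd (tpath ET rt v) = rt \<and> last (tpath ET rt v) = v"
  using tpath_ex[OF acyc conET rtn] by blast

lemma P_nz: "v < n \<Longrightarrow> pg \<phi> (tpath ET rt v) \<noteq> 0 \<and> pg \<phi>' (tpath ET rt v) \<noteq> 0"
proof -
  assume "v < n"
  then have "chain ET (tpath ET rt v)" using P[of v] by (simp add: is_path_chain)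
  then have "chain E (tpath ET rt v)" using chain_mono[OF ETE] by blast
  then show ?thesis using pg_nz[OF g] pg_nz[OF g'] by blast
qed

lemma tree_core:
  assumes e: "{u, v} \<in> E" and Pv: "tpath ET rt v = tpath ET rt u @ [v]" and un: "u < n"
  shows "\<phi>' u v * hh u = \<phi> u v * hh v"
proof -
  have ne: "tpath ET rt u \<noteq> []" using P[OF un] unfolding is_path_def by blast
  have lu: "last (tpath ET rt u) = u" using P[OF un] by blast
  have a: "pg \<psi> (tpath ET rt v) = pg \<psi> (tpath ET rt u) * \<psi> u v" for \<psi>
    using pg_append[OF ne, of "[v]" \<psi>] lu Pv by simp
  have nz: "pg \<phi> (tpath ET rt u) \<noteq> 0" "\<phi> u v \<noteq> 0" using P_nz[OF un] gain_inv[OF g e] by blast+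
  show ?thesis unfolding hh_def a using nz by (simp add: field_simps)
qed

lemma tree_edge:
  assumes e: "{u, v} \<in> ET"
  shows "\<phi>' u v * hh u = \<phi> u v * hh v"
proof -
  have eE: "{u, v} \<in> E" using e ETE by blast
  note uv = sg_edge[OF sg eE]
  show ?thesis
  proof (cases "v \<in> set (tpath ET rt u)")
    case False
    have pu: "is_path ET (tpath ET rt u)" "hd (tpath ET rt u) = rt" "last (tpath ET rt u) = u"
      using P[of u] uv by blast+
    have "is_path ET (tpath ET rt u @ [v])"
      using pu False e unfolding is_path_chain by (simp add: chain_append)
    moreover have "tpath ET rt u \<noteq> []" using pu(1) unfolding is_path_def by blast
    ultimately have "tpath ET rt v = tpath ET rt u @ [v]"
      using tpath_eq[OF acyc, of "tpath ET rt u @ [v]" rt v] pu(2) by (simp add: hd_append)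
    then show ?thesis using tree_core[OF eE] uv by blast
  next
    case True
    then have vu: "tree_le ET rt v u" unfolding tree_le_def using P[of u] uv by blast
    have "u \<notin> set (tpath ET rt v)"
    proof
      assume "u \<in> set (tpath ET rt v)"
      then have "tree_le ET rt u v" unfolding tree_le_def using P[of v] uv by blast
      then show False using tree_le_antisym[OF acyc _ vu] uv by blast
    qed
    have pv: "is_path ET (tpath ET rt v)" "hd (tpath ET rt v) = rt" "last (tpath ET rt v) = v"
      using P[of v] uv by blast+
    have e2: "{v, u} \<in> ET" using e by (simp add: insert_commute)
    have "is_path ET (tpath ET rt v @ [u])"
      using pv \<open>u \<notin> set (tpath ET rt v)\<close> e2 unfolding is_path_chain by (simp add: chain_append)
    moreover have "tpath ET rt v \<noteq> []" using pv(1) unfolding is_path_def by blast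
    ultimately have "tpath ET rt u = tpath ET rt v @ [u]"
      using tpath_eq[OF acyc, of "tpath ET rt v @ [u]" rt u] pv(2) by (simp add: hd_append)
    then have "\<phi>' v u * hh v = \<phi> v u * hh u" using tree_core[of v u] e2 ETE uv by blast
    then show ?thesis using rel_sym[OF g g' eE] by blast
  qed
qed


lemma nontree_core:
  assumes e: "{u, v} \<in> E - ET" and le: "tree_le ET rt u v"
  shows "\<phi>' v u * hh v = \<phi> v u * hh u"
proof -
  have eE: "{u, v} \<in> E" using e by blast
  note uv = sg_edge[OF sg eE]
  have pv: "is_path ET (tpath ET rt v)" "hd (tpath ET rt v) = rt" "last (tpath ET rt v) = v"
    using P[of v] uv by blast+
  have "u \<in> set (tpath ET rt v)" using tree_le_tpath[OF acyc le] by blast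
  then obtain A B where AB: "tpath ET rt v = A @ u # B" by (meson split_list)
  have AB': "tpath ET rt v = (A @ [u]) @ B" using AB by simp
  have Pu: "tpath ET rt u = A @ [u]"
    using tpath_prefix[OF acyc, of "A @ [u]" B rt] pv AB' by simp
  have Bne: "B \<noteq> []"
  proof
    assume "B = []"
    then have "last (tpath ET rt v) = u" using AB by simp
    then show False using pv uv by simp
  qed
  have Qp: "is_path ET (u # B)" using path_suffix[of ET A "u # B"] pv(1) AB by simp
  have lQ: "last (u # B) = v" using pv(3) AB Bne by simp
  have fund: "fund_cycle ET rt {u, v} = u # B"
    unfolding fund_cycle_def
  proof (rule the_equality)
    show "is_path ET (u # B) \<and> {hd (u # B), last (u # B)} = {u, v} \<and> tree_le ET rt (hd (u # B)) (last (u # B))"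
      using Qp lQ le by simp
    fix ys assume ys: "is_path ET ys \<and> {hd ys, last ys} = {u, v} \<and> tree_le ET rt (hd ys) (last ys)"
    then have "(hd ys = u \<and> last ys = v) \<or> (hd ys = v \<and> last ys = u)" by (simp add: doubleton_eq_iff)
    then show "ys = u # B"
    proof
      assume "hd ys = v \<and> last ys = u"
      then have "tree_le ET rt v u" using ys by simp
      then have "u = v" using tree_le_antisym[OF acyc le] by blast
      then show ?thesis using uv by simp
    next
      assume "hd ys = u \<and> last ys = v"
      then show ?thesis using path_unique[OF acyc, of ys "u # B"] ys Qp lQ by simp
    qed
  qed
  have cyc: "cycle_gain \<phi>' (u # B) = cycle_gain \<phi> (u # B)" using fc e fund by metis
  have cg: "cycle_gain \<psi> (u # B) = pg \<psi> (u # B) * \<psi> v u" for \<psi>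
    using cycle_gain_pg[of "u # B" \<psi>] lQ by simp
  have Ane: "A @ [u] \<noteq> []" by simp
  have split: "pg \<psi> (tpath ET rt v) = pg \<psi> (tpath ET rt u) * pg \<psi> (u # B)" for \<psi>
    unfolding AB' Pu pg_append[OF Ane Bne] pg_Cons[OF Bne] by simp
  have chQ: "chain E (u # B)" using Qp chain_mono[OF ETE] by (simp add: is_path_chain)
  have nz: "pg \<phi> (u # B) \<noteq> 0" "pg \<phi> (tpath ET rt u) \<noteq> 0"
    using pg_nz[OF g chQ] P_nz uv by blast+
  have key: "\<phi>' v u * pg \<phi>' (u # B) = \<phi> v u * pg \<phi> (u # B)"
    using cyc cg[of \<phi>] cg[of \<phi>'] by (simp add: mult.commute)
  show ?thesis unfolding hh_def split using nz key
    by (simp add: field_simps)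
qed

lemma edge_rel:
  assumes e: "{u, v} \<in> E"
  shows "\<phi>' u v * hh u = \<phi> u v * hh v"
proof (cases "{u, v} \<in> ET")
  case True then show ?thesis using tree_edge by blast
next
  case False
  have "tree_le ET rt u v \<or> tree_le ET rt v u" using nst e unfolding normal_spanning_tree_def by blast
  then show ?thesis
  proof
    assume "tree_le ET rt u v"
    then have "\<phi>' v u * hh v = \<phi> v u * hh u" using nontree_core e False by blast
    then show ?thesis using rel_sym[OF g g' e] by blast
  next
    assume "tree_le ET rt v u"
    moreover have "{v, u} \<in> E - ET" using e False by (simp add: insert_commute)
    ultimately show ?thesis using nontree_core by blast
  qed
qed

lemma hh_nz: "v < n \<Longrightarrow> hh v \<noteq> 0"
  unfolding hh_def using P_nz by simp

lemma cycle_eq: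
  assumes C: "is_cycle E C"
  shows "cycle_gain \<phi>' C = cycle_gain \<phi> C"
proof -
  define N where "N = length C"
  have N3: "N \<ge> 3" using C unfolding is_cycle_def N_def by simp
  have Cne: "C \<noteq> []" using N3 N_def by auto
  have ed: "{C ! i, C ! (Suc i mod N)} \<in> E" if i: "i < N" for i
  proof (cases "Suc i < N")
    case True
    then show ?thesis using C unfolding is_cycle_def is_path_def N_def by simp
  next
    case False
    then have SiN: "Suc i = N" using i by simp
    then have "i = N - 1" "Suc i mod N = 0" by simp_all
    then have "C ! i = last C" "C ! (Suc i mod N) = hd C" using Cne N_def
      by (simp_all add: last_conv_nth hd_conv_nth)
    then show ?thesis using C unfolding is_cycle_def by simp
  qed
  have vn: "C ! i < n" if "i < N" for i
    using sg_edge[OF sg ed[OF that]] by blast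
  have rel: "\<phi>' (C ! i) (C ! (Suc i mod N)) = \<phi> (C ! i) (C ! (Suc i mod N)) * hh (C ! (Suc i mod N)) / hh (C ! i)"
    if "i < N" for i
    using edge_rel[OF ed[OF that]] hh_nz[OF vn[OF that]] by (simp add: field_simps)
  have nz: "(\<Prod>i<N. hh (C ! i)) \<noteq> 0" using hh_nz vn by simp
  have "cycle_gain \<phi>' C = (\<Prod>i<N. \<phi> (C ! i) (C ! (Suc i mod N)) * hh (C ! (Suc i mod N)) / hh (C ! i))"
    unfolding cycle_gain_def N_def[symmetric] by (intro prod.cong refl) (simp add: rel)
  also have "\<dots> = cycle_gain \<phi> C * (\<Prod>i<N. hh (C ! (Suc i mod N))) / (\<Prod>i<N. hh (C ! i))"
    unfolding cycle_gain_def N_def[symmetric] by (simp add: prod.distrib prod_dividef)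
  also have "(\<Prod>i<N. hh (C ! (Suc i mod N))) = (\<Prod>i<N. hh (C ! i))"
    by (rule prod_shift_mod)
  also have "cycle_gain \<phi> C * (\<Prod>i<N. hh (C ! i)) / (\<Prod>i<N. hh (C ! i)) = cycle_gain \<phi> C"
    using nz by simp
  finally show ?thesis .
qed

end



definition Dt :: "(nat \<Rightarrow> nat \<Rightarrow> 'a::comm_ring_1) \<Rightarrow> nat set \<Rightarrow> 'a" where
  "Dt M S = (\<Sum>p\<in>{p. p permutes S}. of_int (sign p) * (\<Prod>i\<in>S. M i (p i)))"

definition orb :: "(nat \<Rightarrow> nat) \<Rightarrow> nat \<Rightarrow> nat set" where
  "orb p v = range (\<lambda>k. (p ^^ k) v)"

definition Cy :: "(nat \<Rightarrow> nat \<Rightarrow> 'a::comm_ring_1) \<Rightarrow> nat \<Rightarrow> nat set \<Rightarrow> 'a" where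
  "Cy M v W = (\<Sum>q\<in>{q. q permutes W \<and> orb q v = W}. of_int (sign q) * (\<Prod>i\<in>W. M i (q i)))"

lemma funpow_in: "p permutes S \<Longrightarrow> v \<in> S \<Longrightarrow> (p ^^ k) v \<in> S"
  by (induction k) (auto simp: permutes_in_image)

lemma orb_sub: "p permutes S \<Longrightarrow> v \<in> S \<Longrightarrow> orb p v \<subseteq> S"
  unfolding orb_def by (rule image_subsetI, rule funpow_in)

lemma orb_self: "v \<in> orb p v"
  unfolding orb_def by (metis funpow_0 rangeI)

lemma orb_step: "x \<in> orb p v \<Longrightarrow> p x \<in> orb p v"
proof -
  assume "x \<in> orb p v"
  then obtain k where "x = (p ^^ k) v" unfolding orb_def by blast
  then have "p x = (p ^^ Suc k) v" by simp
  then show ?thesis unfolding orb_def by (metis rangeI)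
qed

lemma orb_image:
  assumes "p permutes S" "finite S" "v \<in> S"
  shows "p ` orb p v = orb p v"
proof (rule endo_inj_surj)
  show "finite (orb p v)" using orb_sub[OF assms(1,3)] assms(2) finite_subset by blast
  show "p ` orb p v \<subseteq> orb p v" using orb_step by blast
  show "inj_on p (orb p v)" using permutes_inj[OF assms(1)] inj_on_subset by blast
qed

lemma funpow_restrict:
  assumes "\<And>x. x \<in> W \<Longrightarrow> q x = p x" "\<And>k. (p ^^ k) v \<in> W"
  shows "(q ^^ k) v = (p ^^ k) v"
  by (induction k) (use assms in auto)

lemma orb_cong:
  assumes "\<And>x. x \<in> orb p v \<Longrightarrow> q x = p x"
  shows "orb q v = orb p v"
proof -
  have "(q ^^ k) v = (p ^^ k) v" for k
    by (rule funpow_restrict[of "orb p v"]) (use assms in \<open>auto simp: orb_def\<close>)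
  then show ?thesis unfolding orb_def by simp
qed

lemma decomp_fixed:
  fixes M :: "nat \<Rightarrow> nat \<Rightarrow> 'a::comm_ring_1"
  assumes fS: "finite S" and WS: "W \<subseteq> S" and vW: "v \<in> W"
  shows "(\<Sum>p\<in>{p. p permutes S \<and> orb p v = W}. of_int (sign p) * (\<Prod>i\<in>S. M i (p i)))
         = Cy M v W * Dt M (S - W)"
proof -
  define Q where "Q = {q. q permutes W \<and> orb q v = W}"
  define R where "R = {p. p permutes (S - W)}"
  define T where "T = {p. p permutes S \<and> orb p v = W}"
  define h where "h = (\<lambda>(q, p'). (q :: nat \<Rightarrow> nat) \<circ> (p' :: nat \<Rightarrow> nat))"
  have fW: "finite W" using fS WS finite_subset by blast
  have comp_out: "(q \<circ> p') x = p' x" if "q \<in> Q" "p' \<in> R" "x \<notin> W" for q p' x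
  proof -
    from that(1) have qW: "q permutes W" by (simp add: Q_def)
    from that(2) have pR: "p' permutes (S - W)" by (simp add: R_def)
    have "p' x \<notin> W"
    proof (cases "x \<in> S - W")
      case True then have "p' x \<in> S - W" by (simp only: permutes_in_image[OF pR])
      then show ?thesis by blast
    next
      case False then have "p' x = x" by (rule permutes_not_in[OF pR])
      then show ?thesis using that(3) by simp
    qed
    then show ?thesis by (simp add: permutes_not_in[OF qW])
  qed
  have comp_in: "(q \<circ> p') x = q x" if "p' \<in> R" "x \<in> W" for q p' x
  proof -
    from that(1) have pR: "p' permutes (S - W)" by (simp add: R_def)
    have "x \<notin> S - W" using that(2) by blast
    then show ?thesis by (simp add: permutes_not_in[OF pR])
  qed
  have bij: "bij_betw h (Q \<times> R) T"
  proof (rule bij_betw_imageI)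
    show "inj_on h (Q \<times> R)"
    proof (rule inj_onI)
      fix aa bb assume ab: "aa \<in> Q \<times> R" "bb \<in> Q \<times> R" "h aa = h bb"
      obtain q1 p1 where aa: "aa = (q1, p1)" by (cases aa)
      obtain q2 p2 where bb: "bb = (q2, p2)" by (cases bb)
      have a: "q1 \<in> Q" "p1 \<in> R" "q2 \<in> Q" "p2 \<in> R" "h (q1, p1) = h (q2, p2)" using ab aa bb by auto
      then have e: "q1 \<circ> p1 = q2 \<circ> p2" unfolding h_def by simp
      have q1W: "q1 permutes W" and q2W: "q2 permutes W" using a(1,3) by (simp_all add: Q_def)
      have p1R: "p1 permutes (S - W)" and p2R: "p2 permutes (S - W)" using a(2,4) by (simp_all add: R_def)
      have "q1 = q2"
      proof
        fix x show "q1 x = q2 x"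
        proof (cases "x \<in> W")
          case True
          have "q1 x = (q1 \<circ> p1) x" using comp_in[OF a(2) True, of q1] by simp
          also have "\<dots> = (q2 \<circ> p2) x" using e by simp
          also have "\<dots> = q2 x" using comp_in[OF a(4) True, of q2] by simp
          finally show ?thesis .
        next
          case False then show ?thesis using permutes_not_in[OF q1W False] permutes_not_in[OF q2W False] by simp
        qed
      qed
      moreover have "p1 = p2"
      proof
        fix x show "p1 x = p2 x"
        proof (cases "x \<in> W")
          case True
          then have "x \<notin> S - W" by blast
          then show ?thesis using permutes_not_in[OF p1R] permutes_not_in[OF p2R] by simp
        next
          case False
          have "p1 x = (q1 \<circ> p1) x" using comp_out[OF a(1) a(2) False] by simp
          also have "\<dots> = (q2 \<circ> p2) x" using e by simp
          also have "\<dots> = p2 x" using comp_out[OF a(3) a(4) False] by simp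
          finally show ?thesis .
        qed
      qed
      ultimately show "aa = bb" using aa bb by simp
    qed
    show "h ` (Q \<times> R) = T"
    proof
      show "h ` (Q \<times> R) \<subseteq> T"
      proof clarify
        fix q p' assume a: "q \<in> Q" "p' \<in> R"
        have qW: "q permutes W" and qo: "orb q v = W" using a(1) by (simp_all add: Q_def)
        have qS: "q permutes S" using permutes_subset[OF qW WS] .
        have pR: "p' permutes (S - W)" using a(2) by (simp add: R_def)
        have pS: "p' permutes S" using permutes_subset[OF pR] by blast
        have "orb (q \<circ> p') v = orb q v"
        proof (rule orb_cong)
          fix x assume "x \<in> orb q v"
          then have "x \<in> W" using qo by simp
          then show "(q \<circ> p') x = q x" using comp_in[OF a(2)] by blast
        qed
        then have "orb (q \<circ> p') v = W" using qo by simp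
        moreover have "q \<circ> p' permutes S" using permutes_compose[OF pS qS] .
        ultimately show "h (q, p') \<in> T" unfolding T_def h_def by simp
      qed
      show "T \<subseteq> h ` (Q \<times> R)"
      proof
        fix p assume pT: "p \<in> T"
        then have pS: "p permutes S" and po: "orb p v = W" unfolding T_def by auto
        have vS: "v \<in> S" using vW WS by blast
        have imW: "p ` W = W" using orb_image[OF pS fS vS] po by simp
        have injp: "inj p" using permutes_inj[OF pS] .
        have imS: "p ` S = S" using permutes_image[OF pS] .
        have imR: "p ` (S - W) = S - W" using image_set_diff[OF injp, of S W] imW imS by simp
        define q where "q = (\<lambda>i. if i \<in> W then p i else i)"
        define p' where "p' = (\<lambda>i. if i \<in> W then i else p i)"
        have qW: "q permutes W"
        proof (rule bij_imp_permutes)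
          have "bij_betw p W W" using imW injp unfolding bij_betw_def by (metis inj_on_subset subset_UNIV)
          moreover have "\<And>a. a \<in> W \<Longrightarrow> q a = p a" unfolding q_def by simp
          ultimately show "bij_betw q W W" using bij_betw_cong[of W q p W] by simp
        next
          fix x assume "x \<notin> W" then show "q x = x" unfolding q_def by simp
        qed
        have pR: "p' permutes (S - W)"
        proof (rule bij_imp_permutes)
          have "bij_betw p (S - W) (S - W)" using imR injp unfolding bij_betw_def by (metis inj_on_subset subset_UNIV)
          moreover have "\<And>a. a \<in> S - W \<Longrightarrow> p' a = p a" unfolding p'_def by simp
          ultimately show "bij_betw p' (S - W) (S - W)" using bij_betw_cong[of "S - W" p' p "S - W"] by simp
        next
          fix x assume x: "x \<notin> S - W"
          show "p' x = x"
          proof (cases "x \<in> W")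
            case True then show ?thesis unfolding p'_def by simp
          next
            case False then have "x \<notin> S" using x by blast
            then show ?thesis unfolding p'_def using permutes_not_in[OF pS] False by simp
          qed
        qed
        have qo: "orb q v = W"
        proof -
          have "orb q v = orb p v"
          proof (rule orb_cong)
            fix x assume "x \<in> orb p v" then show "q x = p x" unfolding q_def using po by simp
          qed
          then show ?thesis using po by simp
        qed
        have "p = q \<circ> p'"
        proof
          fix x show "p x = (q \<circ> p') x"
          proof (cases "x \<in> W")
            case True then show ?thesis by (simp add: q_def p'_def)
          next
            case False
            show ?thesis
            proof (cases "x \<in> S")
              case True
              then have "x \<in> S - W" using False by blast
              then have "p x \<in> p ` (S - W)" by blast
              then have "p x \<notin> W" using imR by blast
              then show ?thesis using False by (simp add: q_def p'_def)
            next
              case False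
              then have "p x = x" using permutes_not_in[OF pS] by simp
              then show ?thesis using \<open>x \<notin> W\<close> by (simp add: q_def p'_def)
            qed
          qed
        qed
        moreover have "(q, p') \<in> Q \<times> R" unfolding Q_def R_def using qW pR qo by simp
        ultimately show "p \<in> h ` (Q \<times> R)" unfolding h_def by (metis (no_types, lifting) case_prod_conv image_eqI)
      qed
    qed
  qed
  have tm: "of_int (sign (q \<circ> p')) * (\<Prod>i\<in>S. M i ((q \<circ> p') i))
      = (of_int (sign q) * (\<Prod>i\<in>W. M i (q i))) * (of_int (sign p') * (\<Prod>i\<in>S - W. M i (p' i)))"
    if a: "q \<in> Q" "p' \<in> R" for q p'
  proof -
    have qW: "q permutes W" using a(1) by (simp add: Q_def)
    have pR: "p' permutes (S - W)" using a(2) by (simp add: R_def)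
    have qp: "permutation q" using permutes_imp_permutation[OF fW qW] .
    have pp: "permutation p'" using permutes_imp_permutation[OF _ pR] fS by blast
    have s: "sign (q \<circ> p') = sign q * sign p'" using sign_compose[OF qp pp] .
    have "(\<Prod>i\<in>S. M i ((q \<circ> p') i)) = (\<Prod>i\<in>W. M i ((q \<circ> p') i)) * (\<Prod>i\<in>S - W. M i ((q \<circ> p') i))"
      using prod.subset_diff[OF WS fS] by (simp add: mult.commute)
    also have "(\<Prod>i\<in>W. M i ((q \<circ> p') i)) = (\<Prod>i\<in>W. M i (q i))"
      by (rule prod.cong[OF refl]) (metis comp_in[OF a(2)])
    also have "(\<Prod>i\<in>S - W. M i ((q \<circ> p') i)) = (\<Prod>i\<in>S - W. M i (p' i))"
      by (rule prod.cong[OF refl]) (metis comp_out[OF a] DiffD2)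
    finally show ?thesis using s by (simp add: algebra_simps)
  qed
  have "Cy M v W * Dt M (S - W) = (\<Sum>q\<in>Q. \<Sum>p'\<in>R. (of_int (sign q) * (\<Prod>i\<in>W. M i (q i))) * (of_int (sign p') * (\<Prod>i\<in>S - W. M i (p' i))))"
    unfolding Cy_def Dt_def Q_def[symmetric] R_def[symmetric] by (rule sum_product)
  also have "\<dots> = (\<Sum>(q, p')\<in>Q \<times> R. (of_int (sign q) * (\<Prod>i\<in>W. M i (q i))) * (of_int (sign p') * (\<Prod>i\<in>S - W. M i (p' i))))"
    by (rule sum.cartesian_product)
  also have "\<dots> = (\<Sum>x\<in>Q \<times> R. (\<lambda>p. of_int (sign p) * (\<Prod>i\<in>S. M i (p i))) (h x))"
    by (rule sum.cong[OF refl]) (use tm in \<open>auto simp: h_def\<close>)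
  also have "\<dots> = (\<Sum>p\<in>T. of_int (sign p) * (\<Prod>i\<in>S. M i (p i)))"
    by (rule sum.reindex_bij_betw[OF bij])
  finally show ?thesis unfolding T_def by simp
qed

lemma decomp:
  fixes M :: "nat \<Rightarrow> nat \<Rightarrow> 'a::comm_ring_1"
  assumes fS: "finite S" and vS: "v \<in> S"
  shows "Dt M S = (\<Sum>W\<in>{W. W \<subseteq> S \<and> v \<in> W}. Cy M v W * Dt M (S - W))"
proof -
  have "Dt M S = (\<Sum>W\<in>{W. W \<subseteq> S \<and> v \<in> W}. \<Sum>p\<in>{p. p \<in> {p. p permutes S} \<and> orb p v = W}. of_int (sign p) * (\<Prod>i\<in>S. M i (p i)))"
    unfolding Dt_def
  proof (rule sum.group[symmetric])
    show "finite {p. p permutes S}" using finite_permutations[OF fS] .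
    show "finite {W. W \<subseteq> S \<and> v \<in> W}" using fS by simp
    show "(\<lambda>p. orb p v) ` {p. p permutes S} \<subseteq> {W. W \<subseteq> S \<and> v \<in> W}"
      using orb_sub vS orb_self by blast
  qed
  also have "\<dots> = (\<Sum>W\<in>{W. W \<subseteq> S \<and> v \<in> W}. Cy M v W * Dt M (S - W))"
    by (rule sum.cong[OF refl]) (use decomp_fixed[OF fS] in auto)
  finally show ?thesis .
qed



context
  fixes q :: "nat \<Rightarrow> nat" and W v
  assumes qW: "q permutes W" and fW: "finite W" and vW: "v \<in> W" and qo: "orb q v = W"
begin

lemma injq: "inj q" using permutes_inj[OF qW] .

lemma cancel: "(q ^^ i) x = (q ^^ i) y \<Longrightarrow> x = y"
  using inj_fn[OF injq, of i] by (simp add: inj_def)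

lemma L1: "inj_on (\<lambda>k. (q ^^ k) v) {..<card W}"
proof (rule inj_onI, rule ccontr)
  fix i j assume i: "i \<in> {..<card W}" and j: "j \<in> {..<card W}" and e: "(q ^^ i) v = (q ^^ j) v" and ne: "i \<noteq> j"
  have "\<exists>a b. a < b \<and> b < card W \<and> (q ^^ a) v = (q ^^ b) v"
  proof (cases "i < j")
    case True then show ?thesis by (intro exI[of _ i] exI[of _ j]) (use j e in simp)
  next
    case False then have "j < i" using ne by simp
    then show ?thesis by (intro exI[of _ j] exI[of _ i]) (use i e in simp)
  qed
  then obtain a b where ab: "a < b" "b < card W" "(q ^^ a) v = (q ^^ b) v" by blast
  define d where "d = b - a"
  have d0: "0 < d" "d < card W" using ab unfolding d_def by auto
  have bad: "b = a + d" using ab(1) unfolding d_def by simp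
  have "(q ^^ (a + d)) v = (q ^^ a) ((q ^^ d) v)" by (simp add: funpow_add)
  then have "(q ^^ a) v = (q ^^ a) ((q ^^ d) v)" using ab(3) bad by simp
  then have dv: "(q ^^ d) v = v" using cancel[of a v "(q ^^ d) v"] by simp
  have "W \<subseteq> (\<lambda>k. (q ^^ k) v) ` {..<d}"
  proof
    fix x assume "x \<in> W"
    then obtain k where "x = (q ^^ k) v" using qo unfolding orb_def by blast
    also have "\<dots> = (q ^^ (k mod d)) v" using funpow_mod_eq[OF dv, of k] by simp
    finally show "x \<in> (\<lambda>k. (q ^^ k) v) ` {..<d}" using d0 by simp
  qed
  then have "card W \<le> card ((\<lambda>k. (q ^^ k) v) ` {..<d})" by (simp add: card_mono)
  also have "\<dots> \<le> d" using card_image_le[of "{..<d}"] by simp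
  finally show False using d0 by simp
qed

lemma L2: "(\<lambda>k. (q ^^ k) v) ` {..<card W} = W"
proof (rule card_subset_eq[OF fW])
  show "(\<lambda>k. (q ^^ k) v) ` {..<card W} \<subseteq> W" using funpow_in[OF qW vW] by blast
  show "card ((\<lambda>k. (q ^^ k) v) ` {..<card W}) = card W" using card_image[OF L1] by simp
qed

lemma bijL: "bij_betw (\<lambda>k. (q ^^ k) v) {..<card W} W"
  using L1 L2 by (simp add: bij_betw_def)

lemma cardpos: "card W > 0" using fW vW card_gt_0_iff by blast

lemma L3: "(q ^^ card W) v = v"
proof -
  have "(q ^^ card W) v \<in> W" using funpow_in[OF qW vW] .
  then have "(q ^^ card W) v \<in> (\<lambda>k. (q ^^ k) v) ` {..<card W}" by (simp only: L2)
  then obtain k where k0: "k \<in> {..<card W}" "(q ^^ card W) v = (q ^^ k) v" by (rule imageE) simp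
  then have k: "k < card W" "(q ^^ card W) v = (q ^^ k) v" by simp_all
  show ?thesis
  proof (cases "k = 0")
    case True then show ?thesis using k by simp
  next
    case False
    have ck: "card W = k + (card W - k)" using k(1) by simp
    have "(q ^^ (k + (card W - k))) v = (q ^^ k) ((q ^^ (card W - k)) v)" by (simp add: funpow_add)
    then have "(q ^^ k) v = (q ^^ k) ((q ^^ (card W - k)) v)" using k(2) ck by simp
    then have "(q ^^ (card W - k)) v = (q ^^ 0) v" using cancel[of k v "(q ^^ (card W - k)) v"] by simp
    moreover have "card W - k \<in> {..<card W}" "0 \<in> {..<card W}" using False k cardpos by auto
    ultimately have "card W - k = 0" using inj_onD[OF L1] by metis
    then show ?thesis using k False by simp
  qed
qed

lemma step_mod: "(q ^^ (Suc k mod card W)) v = q ((q ^^ k) v)" if "k < card W" for k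
proof (cases "Suc k < card W")
  case True then show ?thesis by simp
next
  case False
  then have "Suc k = card W" using that by simp
  then have "Suc k mod card W = 0" by simp
  moreover have "q ((q ^^ k) v) = (q ^^ (Suc k)) v" by simp
  ultimately show ?thesis using L3 \<open>Suc k = card W\<close> by simp
qed

lemma nofix: "card W \<ge> 2 \<Longrightarrow> i \<in> W \<Longrightarrow> q i \<noteq> i"
proof
  assume c: "card W \<ge> 2" and i: "i \<in> W" and f: "q i = i"
  obtain k where k: "i = (q ^^ k) v" using i qo unfolding orb_def by blast
  have "(q ^^ k) (q v) = (q ^^ Suc k) v" by (simp only: funpow_Suc_right comp_apply)
  also have "\<dots> = q i" using k by simp
  finally have "(q ^^ k) (q v) = (q ^^ k) v" using f k by simp
  then have "q v = v" using cancel[of k "q v" v] by simp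
  then have "(q ^^ 1) v = (q ^^ 0) v" by simp
  moreover have "1 \<in> {..<card W}" "0 \<in> {..<card W}" using c by auto
  ultimately have "(1::nat) = 0" using inj_onD[OF L1] by blast
  then show False by simp
qed

lemma orb_inv: "orb (inv_into UNIV q) v = W"
proof
  have qi: "inv_into UNIV q permutes W" using permutes_inv[OF qW] .
  show "orb (inv_into UNIV q) v \<subseteq> W" using orb_sub[OF qi vW] .
  have im: "inv_into UNIV q ` orb (inv_into UNIV q) v = orb (inv_into UNIV q) v" using orb_image[OF qi fW vW] .
  have cl: "q y \<in> orb (inv_into UNIV q) v" if "y \<in> orb (inv_into UNIV q) v" for y
  proof -
    have "y \<in> inv_into UNIV q ` orb (inv_into UNIV q) v" by (subst im) (rule that)
    then obtain z where z: "z \<in> orb (inv_into UNIV q) v" "y = inv_into UNIV q z" by (rule imageE) simp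
    have "q y = z" using z(2) permutes_inverses(1)[OF qW, of z] by simp
    then show ?thesis using z(1) by simp
  qed
  have "(q ^^ k) v \<in> orb (inv_into UNIV q) v" for k
  proof (induction k)
    case 0 then show ?case using orb_self by simp
  next
    case (Suc k) then show ?case using cl[OF Suc] by simp
  qed
  then show "W \<subseteq> orb (inv_into UNIV q) v" using qo unfolding orb_def by blast
qed

end



definition ae :: "nat set set \<Rightarrow> (nat \<Rightarrow> nat \<Rightarrow> complex) \<Rightarrow> nat \<Rightarrow> nat \<Rightarrow> complex" where
  "ae E \<phi> i j = (if {i, j} \<in> E then \<phi> i j else 0)"

definition Mg :: "nat set set \<Rightarrow> (nat \<Rightarrow> nat \<Rightarrow> complex) \<Rightarrow> nat \<Rightarrow> nat \<Rightarrow> complex poly" where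
  "Mg E \<phi> i j = [:0, 1:] * (if i = j then 1 else 0) + [:- ae E \<phi> i j:]"

lemma Mg_off: "i \<noteq> j \<Longrightarrow> Mg E \<phi> i j = [:- ae E \<phi> i j:]"
  by (simp add: Mg_def)

lemma no_loop: "simple_graph n E \<Longrightarrow> {i, i} \<notin> E"
  unfolding simple_graph_def by (auto simp: doubleton_eq_iff)

lemma Mg_diag: "simple_graph n E \<Longrightarrow> Mg E \<phi> i i = Mg E \<psi> i i"
  using no_loop unfolding Mg_def ae_def by simp

lemma const_prod: "finite A \<Longrightarrow> (\<Prod>i\<in>A. [:f i:]) = [:\<Prod>i\<in>A. f i:]"
  by (induction A rule: finite_induct) (simp_all add: mult.commute)

lemma unit_inv_cnj: "cmod z = 1 \<Longrightarrow> inverse z = cnj z"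
proof -
  assume "cmod z = 1"
  then have "z * cnj z = 1" using complex_norm_square[of z] by simp
  then show ?thesis by (rule inverse_unique)
qed

context
  fixes q :: "nat \<Rightarrow> nat" and W v
  assumes qW: "q permutes W" and fW: "finite W" and vW: "v \<in> W" and qo: "orb q v = W"
begin

lemma G_list: "cycle_gain \<chi> (map (\<lambda>k. (q ^^ k) v) [0..<card W]) = (\<Prod>i\<in>W. \<chi> i (q i))"
proof -
  have cp: "card W > 0" using cardpos[OF qW fW vW qo] .
  have "cycle_gain \<chi> (map (\<lambda>k. (q ^^ k) v) [0..<card W]) = (\<Prod>k<card W. \<chi> ((q ^^ k) v) (q ((q ^^ k) v)))"
    unfolding cycle_gain_def length_map length_upt diff_zero
  proof (rule prod.cong[OF refl])
    fix k assume "k \<in> {..<card W}"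
    then have k: "k < card W" by simp
    have "Suc k mod card W < card W" using cp by simp
    then show "\<chi> (map (\<lambda>k. (q ^^ k) v) [0..<card W] ! k) (map (\<lambda>k. (q ^^ k) v) [0..<card W] ! (Suc k mod card W))
        = \<chi> ((q ^^ k) v) (q ((q ^^ k) v))"
      using k step_mod[OF qW fW vW qo k] by simp
  qed
  also have "\<dots> = (\<Prod>i\<in>W. \<chi> i (q i))"
    by (rule prod.reindex_bij_betw[OF bijL[OF qW fW vW qo]])
  finally show ?thesis .
qed

lemma L_cycle:
  assumes c3: "card W \<ge> 3" and ed: "\<forall>i\<in>W. {i, q i} \<in> E"
  shows "is_cycle E (map (\<lambda>k. (q ^^ k) v) [0..<card W])"
proof -
  define L where "L = map (\<lambda>k. (q ^^ k) v) [0..<card W]"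
  have lenL: "length L = card W" unfolding L_def by simp
  have inW: "(q ^^ k) v \<in> W" for k using funpow_in[OF qW vW] .
  have d: "distinct L" unfolding L_def distinct_map
    using L1[OF qW fW vW qo] by (simp add: atLeast0LessThan)
  have ch: "\<forall>i. Suc i < length L \<longrightarrow> {L ! i, L ! Suc i} \<in> E"
  proof (intro allI impI)
    fix i assume "Suc i < length L"
    then have "L ! i = (q ^^ i) v" "L ! Suc i = q ((q ^^ i) v)" unfolding L_def by simp_all
    then show "{L ! i, L ! Suc i} \<in> E" using ed inW by simp
  qed
  have "last L = (q ^^ (card W - 1)) v" unfolding L_def using c3 by (simp add: last_map)
  moreover have "hd L = v" unfolding L_def using c3 by (simp add: hd_map)
  moreover have "q ((q ^^ (card W - 1)) v) = v"
  proof -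
    have "q ((q ^^ (card W - 1)) v) = (q ^^ Suc (card W - 1)) v" by simp
    also have "Suc (card W - 1) = card W" using c3 by simp
    finally show ?thesis using L3[OF qW fW vW qo] by simp
  qed
  ultimately have cl: "{last L, hd L} \<in> E" using ed inW by metis
  have "is_cycle E L" unfolding is_cycle_def is_path_def using c3 lenL d ch cl by auto
  then show ?thesis unfolding L_def .
qed

end



lemma pair_eq:
  assumes sg: "simple_graph n E" and g: "gain E \<phi>" and g2: "gain E \<psi>"
    and re: "\<forall>C. is_cycle E C \<longrightarrow> Re (cycle_gain \<phi> C) = Re (cycle_gain \<psi> C)"
    and qW: "q permutes W" and fW: "finite W" and vW: "v \<in> W" and qo: "orb q v = W"
  shows "(\<Prod>i\<in>W. Mg E \<phi> i (q i)) + (\<Prod>i\<in>W. Mg E \<phi> i (inv_into UNIV q i))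
       = (\<Prod>i\<in>W. Mg E \<psi> i (q i)) + (\<Prod>i\<in>W. Mg E \<psi> i (inv_into UNIV q i))"
proof (cases "card W = 1")
  case True
  then obtain x where Wx: "W = {x}" by (rule card_1_singletonE)
  have x: "x = v" using vW Wx by simp
  have qv: "q v = v" using permutes_in_image[OF qW, of v] vW Wx x by simp
  have qiv: "inv_into UNIV q v = v" using permutes_in_image[OF permutes_inv[OF qW], of v] vW Wx x by simp
  show ?thesis unfolding Wx x using qv qiv Mg_diag[OF sg, of \<phi> v \<psi>] by simp
next
  case False
  have c2: "card W \<ge> 2" using False cardpos[OF qW fW vW qo] by simp
  have nf: "q i \<noteq> i" if "i \<in> W" for i using nofix[OF qW fW vW qo c2 that] .
  have Pq: "(\<Prod>i\<in>W. Mg E \<chi> i (q i)) = [:\<Prod>i\<in>W. - ae E \<chi> i (q i):]" for \<chi>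
  proof -
    have "(\<Prod>i\<in>W. Mg E \<chi> i (q i)) = (\<Prod>i\<in>W. [:- ae E \<chi> i (q i):])"
      by (rule prod.cong[OF refl], rule Mg_off) (metis nf)
    then show ?thesis using const_prod[OF fW] by simp
  qed
  have Pi: "(\<Prod>i\<in>W. Mg E \<chi> i (inv_into UNIV q i)) = [:\<Prod>i\<in>W. - ae E \<chi> (q i) i:]" for \<chi>
  proof -
    have "(\<Prod>i\<in>W. Mg E \<chi> i (inv_into UNIV q i)) = (\<Prod>j\<in>W. Mg E \<chi> (q j) (inv_into UNIV q (q j)))"
      by (rule prod.reindex_bij_betw[OF permutes_imp_bij[OF qW], symmetric])
    also have "\<dots> = (\<Prod>j\<in>W. [:- ae E \<chi> (q j) j:])"
    proof (rule prod.cong[OF refl])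
      fix j assume j: "j \<in> W"
      have "inv_into UNIV q (q j) = j" using permutes_inverses(2)[OF qW] .
      moreover have "q j \<noteq> j" using nf[OF j] .
      ultimately show "Mg E \<chi> (q j) (inv_into UNIV q (q j)) = [:- ae E \<chi> (q j) j:]" by (simp add: Mg_off)
    qed
    finally show ?thesis using const_prod[OF fW] by simp
  qed
  define c where "c \<chi> = (\<Prod>i\<in>W. - ae E \<chi> i (q i))" for \<chi>
  define d where "d \<chi> = (\<Prod>i\<in>W. - ae E \<chi> (q i) i)" for \<chi>
  have key: "c \<phi> + d \<phi> = c \<psi> + d \<psi>"
  proof (cases "\<forall>i\<in>W. {i, q i} \<in> E")
    case False
    then obtain i where i: "i \<in> W" "{i, q i} \<notin> E" by blast
    have "{q i, i} \<notin> E" using i(2) by (simp add: insert_commute)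
    then have "c \<chi> = 0" "d \<chi> = 0" for \<chi>
      unfolding c_def d_def using i by (auto intro!: prod_zero[OF fW] simp: ae_def)
    then show ?thesis by simp
  next
    case True
    have dc: "d \<chi> = cnj (c \<chi>)" if gc: "gain E \<chi>" for \<chi>
    proof -
      have "- ae E \<chi> (q i) i = cnj (- ae E \<chi> i (q i))" if i: "i \<in> W" for i
      proof -
        have e: "{i, q i} \<in> E" using True i by blast
        then have e2: "{q i, i} \<in> E" by (simp add: insert_commute)
        have "cmod (\<chi> i (q i)) = 1" "\<chi> (q i) i = inverse (\<chi> i (q i))" using gc e unfolding gain_def by auto
        then have "\<chi> (q i) i = cnj (\<chi> i (q i))" using unit_inv_cnj by simp
        then show ?thesis unfolding ae_def using e e2 by simp
      qed
      then show ?thesis unfolding c_def d_def cnj_prod by (rule prod.cong[OF refl])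
    qed
    have cG: "c \<chi> = (-1) ^ card W * (\<Prod>i\<in>W. \<chi> i (q i))" for \<chi>
    proof -
      have "c \<chi> = (\<Prod>i\<in>W. - \<chi> i (q i))" unfolding c_def ae_def using True by (intro prod.cong refl) simp
      then show ?thesis by (simp add: prod_uminus)
    qed
    have reG: "Re (\<Prod>i\<in>W. \<phi> i (q i)) = Re (\<Prod>i\<in>W. \<psi> i (q i))"
    proof (cases "card W = 2")
      case True
      define w where "w = q v"
      have wW: "w \<in> W" using permutes_in_image[OF qW] vW w_def by simp
      have wv: "w \<noteq> v" using nf[OF vW] w_def by simp
      have W2: "W = {v, w}"
      proof -
        obtain x y where "W = {x, y}" "x \<noteq> y" using True card_2_iff by metis
        then show ?thesis using vW wW wv by auto
      qed
      have qw: "q w = v"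
      proof -
        have "q w \<in> W" using permutes_in_image[OF qW] wW by simp
        moreover have "q w \<noteq> w" using nf[OF wW] .
        ultimately show ?thesis using W2 by auto
      qed
      have e: "{v, w} \<in> E" using \<open>\<forall>i\<in>W. {i, q i} \<in> E\<close> vW w_def by blast
      have one: "(\<Prod>i\<in>W. \<chi> i (q i)) = 1" if gc: "gain E \<chi>" for \<chi>
      proof -
        have "(\<Prod>i\<in>W. \<chi> i (q i)) = \<chi> v w * \<chi> w v" unfolding W2 using wv qw w_def by simp
        then show ?thesis using gain_inv[OF gc e] by simp
      qed
      show ?thesis using one[OF g] one[OF g2] by simp
    next
      case False
      then have c3: "card W \<ge> 3" using c2 by simp
      have cyc: "is_cycle E (map (\<lambda>k. (q ^^ k) v) [0..<card W])"
        using L_cycle[OF qW fW vW qo c3 True] .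
      show ?thesis using re cyc G_list[OF qW fW vW qo] by metis
    qed
    have "c \<phi> + d \<phi> = complex_of_real (2 * Re (c \<phi>))" using dc[OF g] complex_add_cnj by simp
    also have "Re (c \<phi>) = Re (c \<psi>)"
    proof -
      have "Re (c \<chi>) = (-1) ^ card W * Re (\<Prod>i\<in>W. \<chi> i (q i))" for \<chi>
      proof (cases "even (card W)")
        case True then show ?thesis unfolding cG by simp
      next
        case False then show ?thesis unfolding cG by simp
      qed
      then show ?thesis using reG by simp
    qed
    also have "complex_of_real (2 * Re (c \<psi>)) = c \<psi> + d \<psi>" using dc[OF g2] complex_add_cnj by simp
    finally show ?thesis .
  qed
  have "(\<Prod>i\<in>W. Mg E \<phi> i (q i)) + (\<Prod>i\<in>W. Mg E \<phi> i (inv_into UNIV q i)) = [:c \<phi> + d \<phi>:]"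
    unfolding Pq Pi c_def d_def by simp
  also have "\<dots> = [:c \<psi> + d \<psi>:]" using key by simp
  also have "\<dots> = (\<Prod>i\<in>W. Mg E \<psi> i (q i)) + (\<Prod>i\<in>W. Mg E \<psi> i (inv_into UNIV q i))"
    unfolding Pq Pi c_def d_def by simp
  finally show ?thesis .
qed


lemma two_cancel: "(x :: complex poly) + x = y + y \<Longrightarrow> x = y"
proof (rule poly_eqI)
  fix k assume "x + x = y + y"
  then have "coeff (x + x) k = coeff (y + y) k" by (rule arg_cong)
  then have "coeff x k + coeff x k = coeff y k + coeff y k" by (simp only: coeff_add)
  then show "coeff x k = coeff y k" by simp
qed

lemma Cy_eq:
  assumes sg: "simple_graph n E" and g: "gain E \<phi>" and g2: "gain E \<psi>"
    and re: "\<forall>C. is_cycle E C \<longrightarrow> Re (cycle_gain \<phi> C) = Re (cycle_gain \<psi> C)"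
    and fW: "finite W" and vW: "v \<in> W"
  shows "Cy (Mg E \<phi>) v W = Cy (Mg E \<psi>) v W"
proof -
  define Q where "Q = {q. q permutes W \<and> orb q v = W}"
  have invQ: "inv_into UNIV q \<in> Q" if "q \<in> Q" for q
    using that permutes_inv orb_inv[OF _ fW vW] unfolding Q_def by blast
  have invinv: "inv_into UNIV (inv_into UNIV q) = q" if "q \<in> Q" for q
    using that permutes_inv_inv unfolding Q_def by blast
  have bij: "bij_betw (inv_into UNIV) Q Q"
    by (rule bij_betw_byWitness[where f' = "inv_into UNIV"]) (use invQ invinv in auto)
  have sgn: "sign (inv_into UNIV q) = sign q" if "q \<in> Q" for q
  proof -
    have "permutation q" using that permutes_imp_permutation[OF fW] unfolding Q_def by blast
    then show ?thesis by (rule sign_inverse)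
  qed
  have dbl: "Cy M v W + Cy M v W = (\<Sum>q\<in>Q. of_int (sign q) * ((\<Prod>i\<in>W. M i (q i)) + (\<Prod>i\<in>W. M i (inv_into UNIV q i))))"
    for M :: "nat \<Rightarrow> nat \<Rightarrow> complex poly"
  proof -
    have "Cy M v W = (\<Sum>q\<in>Q. of_int (sign (inv_into UNIV q)) * (\<Prod>i\<in>W. M i (inv_into UNIV q i)))"
      unfolding Cy_def Q_def[symmetric]
      by (rule sum.reindex_bij_betw[OF bij, symmetric])
    also have "\<dots> = (\<Sum>q\<in>Q. of_int (sign q) * (\<Prod>i\<in>W. M i (inv_into UNIV q i)))"
      by (rule sum.cong[OF refl]) (simp add: sgn)
    finally have B: "Cy M v W = (\<Sum>q\<in>Q. of_int (sign q) * (\<Prod>i\<in>W. M i (inv_into UNIV q i)))" .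
    have A: "Cy M v W = (\<Sum>q\<in>Q. of_int (sign q) * (\<Prod>i\<in>W. M i (q i)))"
      unfolding Cy_def Q_def ..
    have "(\<Sum>q\<in>Q. of_int (sign q) * (\<Prod>i\<in>W. M i (q i))) + (\<Sum>q\<in>Q. of_int (sign q) * (\<Prod>i\<in>W. M i (inv_into UNIV q i)))
       = Cy M v W + Cy M v W" by (simp only: A[symmetric] B[symmetric])
    moreover have "(\<Sum>q\<in>Q. of_int (sign q) * (\<Prod>i\<in>W. M i (q i))) + (\<Sum>q\<in>Q. of_int (sign q) * (\<Prod>i\<in>W. M i (inv_into UNIV q i)))
       = (\<Sum>q\<in>Q. of_int (sign q) * ((\<Prod>i\<in>W. M i (q i)) + (\<Prod>i\<in>W. M i (inv_into UNIV q i))))"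
      by (simp only: sum.distrib[symmetric] distrib_left)
    ultimately show ?thesis by simp
  qed
  have "Cy (Mg E \<phi>) v W + Cy (Mg E \<phi>) v W = Cy (Mg E \<psi>) v W + Cy (Mg E \<psi>) v W"
    unfolding dbl
  proof (rule sum.cong[OF refl])
    fix q assume "q \<in> Q"
    then have "q permutes W" "orb q v = W" unfolding Q_def by auto
    then show "of_int (sign q) * ((\<Prod>i\<in>W. Mg E \<phi> i (q i)) + (\<Prod>i\<in>W. Mg E \<phi> i (inv_into UNIV q i)))
      = of_int (sign q) * ((\<Prod>i\<in>W. Mg E \<psi> i (q i)) + (\<Prod>i\<in>W. Mg E \<psi> i (inv_into UNIV q i)))"
      using pair_eq[OF sg g g2 re _ fW vW] by simp
  qed
  then show ?thesis by (rule two_cancel)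
qed

lemma Dt_eq:
  assumes sg: "simple_graph n E" and g: "gain E \<phi>" and g2: "gain E \<psi>"
    and re: "\<forall>C. is_cycle E C \<longrightarrow> Re (cycle_gain \<phi> C) = Re (cycle_gain \<psi> C)"
  shows "finite S \<Longrightarrow> Dt (Mg E \<phi>) S = Dt (Mg E \<psi>) S"
proof (induction "card S" arbitrary: S rule: less_induct)
  case less
  show ?case
  proof (cases "S = {}")
    case True then show ?thesis by (simp only: Dt_def prod.empty)
  next
    case False
    then obtain v where vS: "v \<in> S" by blast
    show ?thesis
      unfolding decomp[OF less.prems vS]
    proof (rule sum.cong[OF refl])
      fix W assume "W \<in> {W. W \<subseteq> S \<and> v \<in> W}"
      then have WS: "W \<subseteq> S" and vW: "v \<in> W" by auto
      have fW: "finite W" using WS less.prems finite_subset by blast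
      have "S - W \<subset> S" using vW vS by blast
      then have cl: "card (S - W) < card S" by (rule psubset_card_mono[OF less.prems])
      have "Dt (Mg E \<phi>) (S - W) = Dt (Mg E \<psi>) (S - W)"
        by (rule less.hyps[OF cl]) (use less.prems in simp)
      then show "Cy (Mg E \<phi>) v W * Dt (Mg E \<phi>) (S - W) = Cy (Mg E \<psi>) v W * Dt (Mg E \<psi>) (S - W)"
        using Cy_eq[OF sg g g2 re fW vW] by simp
    qed
  qed
qed

lemma cp_Dt: "char_poly (gain_adj_mat n E \<phi>) = Dt (Mg E \<phi>) {0..<n}"
proof -
  define B where "B = char_poly_matrix (gain_adj_mat n E \<phi>)"
  have dB: "dim_row B = n" "dim_col B = n" unfolding B_def char_poly_matrix_def gain_adj_mat_def by simp_all
  have ent: "B $$ (i, j) = Mg E \<phi> i j" if "i < n" "j < n" for i j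
    unfolding B_def char_poly_matrix_def gain_adj_mat_def Mg_def ae_def using that by simp
  have "char_poly (gain_adj_mat n E \<phi>) = det B" unfolding B_def char_poly_def ..
  also have "\<dots> = (\<Sum>p\<in>{p. p permutes {0..<n}}. of_int (sign p) * (\<Prod>i = 0..<n. B $$ (i, p i)))"
    unfolding det_def dB by simp
  also have "\<dots> = Dt (Mg E \<phi>) {0..<n}"
    unfolding Dt_def
  proof (rule sum.cong[OF refl])
    fix p assume "p \<in> {p. p permutes {0..<n}}"
    then have p: "p permutes {0..<n}" by simp
    have "(\<Prod>i = 0..<n. B $$ (i, p i)) = (\<Prod>i\<in>{0..<n}. Mg E \<phi> i (p i))"
    proof (rule prod.cong[OF refl])
      fix i assume i: "i \<in> {0..<n}"
      then have "p i \<in> {0..<n}" using permutes_in_image[OF p] by simp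
      then show "B $$ (i, p i) = Mg E \<phi> i (p i)" using ent i by simp
    qed
    then show "of_int (sign p) * (\<Prod>i = 0..<n. B $$ (i, p i)) = of_int (sign p) * (\<Prod>i\<in>{0..<n}. Mg E \<phi> i (p i))"
      by simp
  qed
  finally show ?thesis .
qed


theorem lemma3p2:
  fixes n :: nat and E ET :: "nat set set" and rt :: nat
    and r s :: "nat set \<Rightarrow> real" and \<phi> \<psi> :: "nat \<Rightarrow> nat \<Rightarrow> complex"
  assumes "simple_graph n E"
    and "connected_on n E"
    and "normal_spanning_tree n E ET rt"
    and "\<forall>e \<in> E - ET. r e \<in> {0..<2*pi} \<and> s e \<in> {0..<2*pi}"
    and "\<exists>e \<in> E - ET. r e \<noteq> s e"
    and "\<phi> \<in> A_T E ET rt r" and "\<psi> \<in> A_T E ET rt s"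
    and "\<forall>C. is_cycle E C \<longrightarrow> Re (cycle_gain \<phi> C) = Re (cycle_gain \<psi> C)"
  shows "\<forall>\<phi>' \<in> A_T E ET rt r \<union> A_T E ET rt s. \<forall>\<psi>' \<in> A_T E ET rt r \<union> A_T E ET rt s.
           same_spectrum (gain_adj_mat n E \<phi>') (gain_adj_mat n E \<psi>')"
proof -
  note sg = assms(1) and nst = assms(3)
  have gphi: "gain E \<phi>" and gpsi: "gain E \<psi>" using assms(6,7) unfolding A_T_def by auto
  have good: "gain E \<chi> \<and> (\<forall>C. is_cycle E C \<longrightarrow> Re (cycle_gain \<chi> C) = Re (cycle_gain \<phi> C))"
    if chi: "\<chi> \<in> A_T E ET rt r \<union> A_T E ET rt s" for \<chi>
  proof (cases "\<chi> \<in> A_T E ET rt r")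
    case True
    then have gc: "gain E \<chi>" unfolding A_T_def by simp
    have fc: "\<forall>e\<in>E - ET. cycle_gain \<chi> (fund_cycle ET rt e) = cycle_gain \<phi> (fund_cycle ET rt e)"
      using True assms(6) unfolding A_T_def by simp
    show ?thesis using gc cycle_eq[OF sg nst gphi gc fc] by simp
  next
    case False
    then have cs: "\<chi> \<in> A_T E ET rt s" using chi by simp
    then have gc: "gain E \<chi>" unfolding A_T_def by simp
    have fc: "\<forall>e\<in>E - ET. cycle_gain \<chi> (fund_cycle ET rt e) = cycle_gain \<psi> (fund_cycle ET rt e)"
      using cs assms(7) unfolding A_T_def by simp
    show ?thesis using gc cycle_eq[OF sg nst gpsi gc fc] assms(8) by simp
  qed
  have cp: "char_poly (gain_adj_mat n E \<chi>) = char_poly (gain_adj_mat n E \<phi>)"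
    if chi: "\<chi> \<in> A_T E ET rt r \<union> A_T E ET rt s" for \<chi>
  proof -
    have gc: "gain E \<chi>" and re: "\<forall>C. is_cycle E C \<longrightarrow> Re (cycle_gain \<chi> C) = Re (cycle_gain \<phi> C)"
      using good[OF chi] by auto
    have "Dt (Mg E \<chi>) {0..<n} = Dt (Mg E \<phi>) {0..<n}" using Dt_eq[OF sg gc gphi re] by simp
    then show ?thesis by (simp add: cp_Dt)
  qed
  show ?thesis
  proof (intro ballI)
    fix \<phi>' \<psi>' assume a: "\<phi>' \<in> A_T E ET rt r \<union> A_T E ET rt s" "\<psi>' \<in> A_T E ET rt r \<union> A_T E ET rt s"
    have "char_poly (gain_adj_mat n E \<phi>') = char_poly (gain_adj_mat n E \<psi>')" using cp[OF a(1)] cp[OF a(2)] by simp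
    then show "same_spectrum (gain_adj_mat n E \<phi>') (gain_adj_mat n E \<psi>')"
      unfolding same_spectrum_def by (simp add: gain_adj_mat_def)
  qed
qed

end
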